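(* Let $G$ and $H$ be Markov-equivalent DAGs on the same vertex set, and let $j$ be a sink node of $G$ that is not a sink node of $H$. Suppose $H$ has at least two edges, one of which is $j\to l$. If every edge $i\to k$ of $H$ other than $j\to l$ satisfies $j\in\mathrm{pa}_H(k)$, then $j$ is a source node of a connected component of $H$ that is complete (any two of its vertices are adjacent), and every other connected component of $H$ is an isolated vertex.
   Context: Two DAGs are Markov equivalent iff they have the same skeleton (underlying undirected graph) and the same v-structures (edges $i\to k\leftarrow m$ with $i,m$ nonadjacent). A sink has no outgoing edges; a source has no incoming edges; connected components are those of the skeleton. *)

theory Defs
  imports Main
begin

definition dag :: "'a set \<Rightarrow> ('a \<times> 'a) set \<Rightarrow> bool" where
  "dag V E \<longleftrightarrow> finite V \<and> E \<subseteq> V \<times> V \<and> acyclic E"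

definition adj :: "('a \<times> 'a) set \<Rightarrow> 'a \<Rightarrow> 'a \<Rightarrow> bool" where
  "adj E i j \<longleftrightarrow> (i, j) \<in> E \<or> (j, i) \<in> E"

definition skeleton :: "('a \<times> 'a) set \<Rightarrow> ('a \<times> 'a) set" where
  "skeleton E = E \<union> E\<inverse>"

definition vstructures :: "('a \<times> 'a) set \<Rightarrow> ('a \<times> 'a \<times> 'a) set" where
  "vstructures E = {(i, k, m). (i, k) \<in> E \<and> (m, k) \<in> E \<and> i \<noteq> m \<and> \<not> adj E i m}"

definition markov_equiv :: "'a set \<Rightarrow> ('a \<times> 'a) set \<Rightarrow> ('a \<times> 'a) set \<Rightarrow> bool" where
  "markov_equiv V G H \<longleftrightarrow> dag V G \<and> dag V H \<and> skeleton G = skeleton H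
     \<and> vstructures G = vstructures H"

definition sink :: "('a \<times> 'a) set \<Rightarrow> 'a \<Rightarrow> bool" where
  "sink E j \<longleftrightarrow> (\<forall>k. (j, k) \<notin> E)"

definition source :: "('a \<times> 'a) set \<Rightarrow> 'a \<Rightarrow> bool" where
  "source E j \<longleftrightarrow> (\<forall>i. (i, j) \<notin> E)"

definition pa :: "('a \<times> 'a) set \<Rightarrow> 'a \<Rightarrow> 'a set" where
  "pa E k = {i. (i, k) \<in> E}"

definition component :: "'a set \<Rightarrow> ('a \<times> 'a) set \<Rightarrow> 'a \<Rightarrow> 'a set" where
  "component V E x = {y \<in> V. (x, y) \<in> (skeleton E)\<^sup>*}"

definition complete_on :: "('a \<times> 'a) set \<Rightarrow> 'a set \<Rightarrow> bool" where
  "complete_on E C \<longleftrightarrow> (\<forall>a\<in>C. \<forall>b\<in>C. a \<noteq> b \<longrightarrow> adj E a b)"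

end

theory Submission
  imports Defs
begin

theorem mainTheorem17:
  fixes V :: "'a set" and G H :: "('a \<times> 'a) set" and j l :: 'a
  assumes "markov_equiv V G H"
    and "j \<in> V"
    and "sink G j" and "\<not> sink H j"
    and "card H \<ge> 2"
    and "(j, l) \<in> H"
    and "\<forall>(i, k) \<in> H. (i, k) \<noteq> (j, l) \<longrightarrow> j \<in> pa H k"
  shows "(\<forall>i \<in> component V H j. (i, j) \<notin> H)
       \<and> complete_on H (component V H j)
       \<and> (\<forall>x \<in> V. x \<notin> component V H j \<longrightarrow> component V H x = {x})"
proof -
  have dH: "dag V H" and dG: "dag V G" and sk: "skeleton G = skeleton H"
    and vs: "vstructures G = vstructures H"
    using assms(1) unfolding markov_equiv_def by auto
  have HV: "H \<subseteq> V \<times> V" using dH unfolding dag_def by auto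
  have A: "(j, j) \<notin> H" using dH unfolding dag_def acyclic_def by auto
  have B: "(j, k) \<in> H" if "(i, k) \<in> H" for i k
    using assms(6,7) that unfolding pa_def by fastforce
  have C: "(i, j) \<notin> H" for i using A B by blast
  have adjeq: "adj H a b \<longleftrightarrow> adj G a b" for a b
  proof -
    have "adj E a b \<longleftrightarrow> (a, b) \<in> skeleton E" for E :: "('a \<times> 'a) set"
      unfolding adj_def skeleton_def by auto
    thus ?thesis using sk by simp
  qed
  have D: "i = j \<or> (j, i) \<in> H" if "(i, k) \<in> H" for i k
  proof (rule ccontr)
    assume n: "\<not> (i = j \<or> (j, i) \<in> H)"
    hence "\<not> adj H j i" using C unfolding adj_def by auto
    moreover have "(j, k) \<in> H" using B that .
    ultimately have "(j, k, i) \<in> vstructures H" using that n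
      unfolding vstructures_def by auto
    hence "(j, k, i) \<in> vstructures G" using vs by simp
    hence "(j, k) \<in> G" unfolding vstructures_def by auto
    thus False using assms(3) unfolding sink_def by auto
  qed
  have F: "adj H k m" if "(j, k) \<in> H" "(j, m) \<in> H" "k \<noteq> m" for k m
  proof (rule ccontr)
    assume na: "\<not> adj H k m"
    have "(k, j) \<in> G" if "(j, k) \<in> H" for k
    proof -
      have "(j, k) \<in> skeleton G" using that sk unfolding skeleton_def by auto
      thus ?thesis using assms(3) unfolding skeleton_def sink_def by auto
    qed
    hence "(k, j) \<in> G" "(m, j) \<in> G" using that by auto
    moreover have "\<not> adj G k m" using na adjeq by simp
    ultimately have "(k, j, m) \<in> vstructures G" using that(3)
      unfolding vstructures_def by auto
    hence "(k, j, m) \<in> vstructures H" using vs by simp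
    hence "(k, j) \<in> H" unfolding vstructures_def by auto
    thus False using C by auto
  qed
  define S where "S = insert j {k. (j, k) \<in> H}"
  have edgeS: "a \<in> S \<and> b \<in> S" if "(a, b) \<in> skeleton H" for a b
    using that B D unfolding S_def skeleton_def by blast
  have compS: "component V H j \<subseteq> S"
  proof
    fix y assume "y \<in> component V H j"
    hence "(j, y) \<in> (skeleton H)\<^sup>*" unfolding component_def by auto
    thus "y \<in> S"
    proof (induction rule: rtrancl_induct)
      case base thus ?case unfolding S_def by auto
    next
      case (step y z) thus ?case using edgeS by blast
    qed
  qed
  have Scomp: "S \<subseteq> component V H j"
  proof
    fix x assume "x \<in> S"
    then consider "x = j" | "(j, x) \<in> H" unfolding S_def by auto
    thus "x \<in> component V H j"
    proof cases
      case 1 thus ?thesis using assms(2) unfolding component_def by auto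
    next
      case 2
      hence "x \<in> V" using HV by auto
      moreover have "(j, x) \<in> skeleton H" using 2 unfolding skeleton_def by auto
      ultimately show ?thesis unfolding component_def by auto
    qed
  qed
  have P1: "\<forall>i \<in> component V H j. (i, j) \<notin> H" using C by auto
  have P2: "complete_on H (component V H j)"
    unfolding complete_on_def
  proof (intro ballI impI)
    fix a b assume ab: "a \<in> component V H j" "b \<in> component V H j" "a \<noteq> b"
    hence "a \<in> S" "b \<in> S" using compS by auto
    thus "adj H a b" using ab(3) F unfolding S_def adj_def by auto
  qed
  have P3: "component V H x = {x}" if "x \<in> V" "x \<notin> component V H j" for x
  proof -
    have xS: "x \<notin> S" using that Scomp by auto
    have "y = x" if "(x, y) \<in> (skeleton H)\<^sup>*" for y
      using that
    proof (cases rule: converse_rtranclE)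
      case (step z) thus ?thesis using edgeS xS by blast
    qed auto
    thus ?thesis using that(1) unfolding component_def by auto
  qed
  show ?thesis using P1 P2 P3 by blast
qed

end
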